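(* Let $A$ be a ring and $I\subset A$ an ideal. (1) $A$ is $I$-adically separated (resp. $I$-adically complete) if and only if every $I$-adic Cauchy sequence consisting of elements of $I$ has at most one (resp. exactly one) limit in $I$. (2) Let $B$ be another ring with ideal $J$. If $I\cong J$ as (possibly non-unital) rings, then $A$ is $I$-adically separated (resp. complete) if and only if $B$ is $J$-adically separated (resp. complete).
   Context: Rings are commutative with $1$. "$I$-adically complete" means Hausdorff complete for the $I$-adic topology. An $I$-adic Cauchy sequence in $I$ is a sequence $\{x_n\}$ in $I$ with $x_n\equiv x_m \bmod I^n$ for $n\le m$ (equivalently, Cauchy for the $I$-adic topology). *)

theory Defs
  imports Main
begin

definition is_ideal :: "'a::comm_ring_1 set \<Rightarrow> bool" where
  "is_ideal I \<longleftrightarrow> 0 \<in> I \<and> (\<forall>x\<in>I. \<forall>y\<in>I. x + y \<in> I) \<and> (\<forall>a x. x \<in> I \<longrightarrow> a * x \<in> I)"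

definition ideal_gen :: "'a::comm_ring_1 set \<Rightarrow> 'a set" where
  "ideal_gen S = \<Inter> {J. is_ideal J \<and> S \<subseteq> J}"

text \<open>The n-th power I^n of an ideal: generated by all products of n elements of I
  (I^0 = A).\<close>
definition ideal_pow :: "'a::comm_ring_1 set \<Rightarrow> nat \<Rightarrow> 'a set" where
  "ideal_pow I n = ideal_gen {prod_list xs | xs. length xs = n \<and> set xs \<subseteq> I}"

definition adic_separated :: "'a::comm_ring_1 set \<Rightarrow> bool" where
  "adic_separated I \<longleftrightarrow> (\<Inter>n. ideal_pow I n) = {0}"

text \<open>I-adically (Hausdorff) complete: the canonical map A \<rightarrow> lim A/I^n is bijective.
  Elements of lim A/I^n are compatible systems, represented by sequences y with
  y m - y n \<in> I^n for n \<le> m; injectivity is separatedness, surjectivity says every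
  compatible system comes from an element a with y n - a \<in> I^n for all n.\<close>
definition adic_complete :: "'a::comm_ring_1 set \<Rightarrow> bool" where
  "adic_complete I \<longleftrightarrow> adic_separated I \<and>
     (\<forall>y::nat \<Rightarrow> 'a. (\<forall>n m. n \<le> m \<longrightarrow> y m - y n \<in> ideal_pow I n) \<longrightarrow>
        (\<exists>a. \<forall>n. y n - a \<in> ideal_pow I n))"

definition adic_cauchy :: "'a::comm_ring_1 set \<Rightarrow> (nat \<Rightarrow> 'a) \<Rightarrow> bool" where
  "adic_cauchy I x \<longleftrightarrow> (\<forall>n m. n \<le> m \<longrightarrow> x n - x m \<in> ideal_pow I n)"

definition adic_limit :: "'a::comm_ring_1 set \<Rightarrow> (nat \<Rightarrow> 'a) \<Rightarrow> 'a \<Rightarrow> bool" where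
  "adic_limit I x a \<longleftrightarrow> (\<forall>k. \<exists>N. \<forall>n\<ge>N. x n - a \<in> ideal_pow I k)"

definition nonunital_ring_iso :: "('a::comm_ring_1 \<Rightarrow> 'b::comm_ring_1) \<Rightarrow> 'a set \<Rightarrow> 'b set \<Rightarrow> bool" where
  "nonunital_ring_iso f I J \<longleftrightarrow> bij_betw f I J \<and>
     (\<forall>x\<in>I. \<forall>y\<in>I. f (x + y) = f x + f y \<and> f (x * y) = f x * f y)"

end

theory Submission
  imports Defs
begin

lemma ideal_gen_ideal: "is_ideal (ideal_gen S)"
proof -
  let ?F = "{J. is_ideal J \<and> S \<subseteq> J}"
  have "0 \<in> \<Inter> ?F" by (auto simp: is_ideal_def)
  moreover have "\<forall>x\<in>\<Inter> ?F. \<forall>y\<in>\<Inter> ?F. x + y \<in> \<Inter> ?F"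
  proof (intro ballI)
    fix x y assume "x \<in> \<Inter> ?F" "y \<in> \<Inter> ?F"
    then show "x + y \<in> \<Inter> ?F" unfolding is_ideal_def by blast
  qed
  moreover have "\<forall>a x. x \<in> \<Inter> ?F \<longrightarrow> a * x \<in> \<Inter> ?F"
  proof (intro allI impI)
    fix a x assume "x \<in> \<Inter> ?F"
    then show "a * x \<in> \<Inter> ?F" unfolding is_ideal_def by blast
  qed
  ultimately show ?thesis unfolding ideal_gen_def is_ideal_def[of "\<Inter> ?F"] by blast
qed

lemma ideal_gen_sub: "S \<subseteq> ideal_gen S"
  unfolding ideal_gen_def by auto

lemma ideal_gen_min: "is_ideal J \<Longrightarrow> S \<subseteq> J \<Longrightarrow> ideal_gen S \<subseteq> J"
  unfolding ideal_gen_def by auto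

lemma ideal_zero: "is_ideal J \<Longrightarrow> 0 \<in> J"
  unfolding is_ideal_def by auto

lemma ideal_add: "is_ideal J \<Longrightarrow> x \<in> J \<Longrightarrow> y \<in> J \<Longrightarrow> x + y \<in> J"
  unfolding is_ideal_def by auto

lemma ideal_mult: "is_ideal J \<Longrightarrow> x \<in> J \<Longrightarrow> a * x \<in> J"
  unfolding is_ideal_def by auto

lemma ideal_mult_right: "is_ideal J \<Longrightarrow> x \<in> J \<Longrightarrow> x * a \<in> J"
  using ideal_mult[of J x a] by (simp add: mult.commute)

lemma ideal_neg: "is_ideal J \<Longrightarrow> x \<in> J \<Longrightarrow> - x \<in> J"
  using ideal_mult[of J x "-1"] by simp

lemma ideal_diff: "is_ideal J \<Longrightarrow> x \<in> J \<Longrightarrow> y \<in> J \<Longrightarrow> x - y \<in> J"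
  using ideal_add[of J x "-y"] ideal_neg[of J y] by simp

lemma pow_ideal: "is_ideal (ideal_pow I n)"
  unfolding ideal_pow_def by (rule ideal_gen_ideal)

lemma pow_gen: "length xs = n \<Longrightarrow> set xs \<subseteq> I \<Longrightarrow> prod_list xs \<in> ideal_pow I n"
proof -
  assume "length xs = n" "set xs \<subseteq> I"
  then have "prod_list xs \<in> {prod_list xs |xs. length xs = n \<and> set xs \<subseteq> I}" by blast
  then show ?thesis unfolding ideal_pow_def by (rule subsetD[OF ideal_gen_sub])
qed

lemma pow_0: "ideal_pow (I::'a::comm_ring_1 set) 0 = UNIV"
proof -
  have "prod_list [] \<in> ideal_pow I 0" by (rule pow_gen) auto
  then have "(1::'a) \<in> ideal_pow I 0" by simp
  then have "a * 1 \<in> ideal_pow I 0" for a :: 'a by (rule ideal_mult[OF pow_ideal])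
  then show ?thesis by auto
qed

lemma pow_1: assumes "is_ideal I" shows "ideal_pow I 1 = I"
proof
  show "ideal_pow I 1 \<subseteq> I" unfolding ideal_pow_def
  proof (rule ideal_gen_min[OF assms])
    show "{prod_list xs |xs. length xs = 1 \<and> set xs \<subseteq> I} \<subseteq> I"
    proof safe
      fix xs :: "'a list" assume "length xs = 1" "set xs \<subseteq> I"
      then obtain y where "xs = [y]" by (cases xs) auto
      then show "prod_list xs \<in> I" using \<open>set xs \<subseteq> I\<close> by simp
    qed
  qed
  show "I \<subseteq> ideal_pow I 1"
  proof
    fix x assume "x \<in> I"
    then have "prod_list [x] \<in> ideal_pow I 1" by (intro pow_gen) auto
    then show "x \<in> ideal_pow I 1" by simp
  qed
qed

lemma pow_Suc_sub: "ideal_pow I (Suc n) \<subseteq> ideal_pow I n"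
  unfolding ideal_pow_def[of I "Suc n"]
proof (rule ideal_gen_min[OF pow_ideal], safe)
  fix xs :: "'a list" assume "length xs = Suc n" "set xs \<subseteq> I"
  then obtain y ys where "xs = y # ys" "length ys = n" "set ys \<subseteq> I"
    by (cases xs) auto
  then have "prod_list ys \<in> ideal_pow I n" by (intro pow_gen)
  then have "y * prod_list ys \<in> ideal_pow I n" by (rule ideal_mult[OF pow_ideal])
  then show "prod_list xs \<in> ideal_pow I n" using \<open>xs = y # ys\<close> by simp
qed

lemma pow_anti: "k \<le> n \<Longrightarrow> ideal_pow I n \<subseteq> ideal_pow I k"
proof (induction n rule: dec_induct)
  case base then show ?case by simp
next
  case (step n) then show ?case using pow_Suc_sub by blast
qed

lemma pow_sub_I: "is_ideal I \<Longrightarrow> n \<ge> 1 \<Longrightarrow> ideal_pow I n \<subseteq> I"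
  using pow_anti[of 1 n I] pow_1 by blast

inductive_set spanP :: "'a::comm_ring_1 set \<Rightarrow> nat \<Rightarrow> 'a set" for I n where
  sp0: "0 \<in> spanP I n"
| spg: "length xs = n \<Longrightarrow> set xs \<subseteq> I \<Longrightarrow> prod_list xs \<in> spanP I n"
| spadd: "a \<in> spanP I n \<Longrightarrow> b \<in> spanP I n \<Longrightarrow> a + b \<in> spanP I n"
| spneg: "a \<in> spanP I n \<Longrightarrow> - a \<in> spanP I n"

lemma span_mult:
  assumes "is_ideal I" "n \<ge> 1" "a \<in> spanP I n" shows "c * a \<in> spanP I n"
  using assms(3)
proof induction
  case sp0 then show ?case by (simp add: spanP.sp0)
next
  case (spg xs)
  then obtain y ys where "xs = y # ys" using assms(2) by (cases xs) auto
  then have "c * prod_list xs = prod_list ((c*y) # ys)" by (simp add: mult.assoc)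
  moreover have "prod_list ((c*y) # ys) \<in> spanP I n"
    using spg \<open>xs = y # ys\<close> ideal_mult[OF assms(1)] by (intro spanP.spg) auto
  ultimately show ?case by simp
next
  case (spadd a b) then show ?case by (metis distrib_left spanP.spadd)
next
  case (spneg a) then show ?case by (metis mult_minus_right spanP.spneg)
qed

lemma pow_eq_span:
  assumes "is_ideal I" "n \<ge> 1" shows "ideal_pow I n = spanP I n"
proof
  show "ideal_pow I n \<subseteq> spanP I n" unfolding ideal_pow_def
  proof (rule ideal_gen_min)
    show "is_ideal (spanP I n)" unfolding is_ideal_def
      using span_mult[OF assms] by (auto intro: spanP.intros)
    show "{prod_list xs |xs. length xs = n \<and> set xs \<subseteq> I} \<subseteq> spanP I n"
      by (auto intro: spanP.intros)
  qed
  show "spanP I n \<subseteq> ideal_pow I n"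
  proof
    fix a assume "a \<in> spanP I n" then show "a \<in> ideal_pow I n"
      by induction (auto intro: pow_gen ideal_zero ideal_add ideal_neg pow_ideal)
  qed
qed

locale isoctx =
  fixes I :: "'a::comm_ring_1 set" and J :: "'b::comm_ring_1 set" and f :: "'a \<Rightarrow> 'b"
  assumes iI: "is_ideal I" and iJ: "is_ideal J" and iso: "nonunital_ring_iso f I J"
begin

lemma bij: "bij_betw f I J" using iso unfolding nonunital_ring_iso_def by blast
lemma fadd: "x \<in> I \<Longrightarrow> y \<in> I \<Longrightarrow> f (x + y) = f x + f y"
  using iso unfolding nonunital_ring_iso_def by blast
lemma fmul: "x \<in> I \<Longrightarrow> y \<in> I \<Longrightarrow> f (x * y) = f x * f y"
  using iso unfolding nonunital_ring_iso_def by blast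
lemma fI: "x \<in> I \<Longrightarrow> f x \<in> J" using bij bij_betwE by blast
lemma finj: "x \<in> I \<Longrightarrow> y \<in> I \<Longrightarrow> f x = f y \<Longrightarrow> x = y"
  using bij unfolding bij_betw_def inj_on_def by blast

lemma f0: "f 0 = 0"
proof -
  have "f (0 + 0) = f 0 + f 0" by (rule fadd[OF ideal_zero[OF iI] ideal_zero[OF iI]])
  then show ?thesis by simp
qed

lemma fneg: "x \<in> I \<Longrightarrow> f (- x) = - f x"
proof -
  assume x: "x \<in> I"
  have "f x + f (- x) = 0" using fadd[of x "-x"] ideal_neg[OF iI x] x f0 by simp
  then show ?thesis using minus_unique by metis
qed

lemma fdiff: "x \<in> I \<Longrightarrow> y \<in> I \<Longrightarrow> f (x - y) = f x - f y"
  using fadd[of x "-y"] fneg[of y] ideal_neg[OF iI, of y] by simp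

lemma fprod: "set xs \<subseteq> I \<Longrightarrow> xs \<noteq> [] \<Longrightarrow> prod_list xs \<in> I \<and> f (prod_list xs) = prod_list (map f xs)"
proof (induction xs)
  case Nil then show ?case by simp
next
  case (Cons y ys)
  show ?case
  proof (cases "ys = []")
    case True then show ?thesis using Cons by simp
  next
    case False
    then have "prod_list ys \<in> I \<and> f (prod_list ys) = prod_list (map f ys)" using Cons by auto
    then show ?thesis using Cons fmul[of y "prod_list ys"] ideal_mult[OF iI] by auto
  qed
qed

lemma span_map: "a \<in> spanP I n \<Longrightarrow> n \<ge> 1 \<Longrightarrow> a \<in> I \<and> f a \<in> spanP J n"
proof (induction rule: spanP.induct)
  case sp0 then show ?case using f0 ideal_zero[OF iI] by (simp add: spanP.sp0)
next
  case (spg xs)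
  then have ne: "xs \<noteq> []" by auto
  have "set (map f xs) \<subseteq> J" using spg fI by auto
  then have "prod_list (map f xs) \<in> spanP J n" using spg by (intro spanP.spg) auto
  then show ?case using fprod[OF spg(2) ne] by simp
next
  case (spadd a b) then show ?case using fadd ideal_add[OF iI] by (auto intro: spanP.spadd)
next
  case (spneg a) then show ?case using fneg ideal_neg[OF iI] by (auto intro: spanP.spneg)
qed

lemma pow_map: "a \<in> I \<Longrightarrow> a \<in> ideal_pow I n \<Longrightarrow> f a \<in> ideal_pow J n"
proof (cases "n = 0")
  case True then show ?thesis by (simp add: pow_0)
next
  case False
  assume "a \<in> ideal_pow I n"
  have n1: "n \<ge> 1" using False by simp
  have "a \<in> spanP I n" using \<open>a \<in> ideal_pow I n\<close> pow_eq_span[OF iI n1] by simp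
  then have "f a \<in> spanP J n" using span_map n1 by blast
  then show ?thesis using pow_eq_span[OF iJ n1] by simp
qed

lemma inv_iso: "nonunital_ring_iso (inv_into I f) J I"
  unfolding nonunital_ring_iso_def
proof (intro conjI ballI)
  show "bij_betw (inv_into I f) J I" using bij by (rule bij_betw_inv_into)
  fix u v assume u: "u \<in> J" and v: "v \<in> J"
  obtain x where x: "x \<in> I" "u = f x" using u bij by (metis bij_betw_imp_surj_on imageE)
  obtain y where y: "y \<in> I" "v = f y" using v bij by (metis bij_betw_imp_surj_on imageE)
  have inj: "inj_on f I" using bij bij_betw_def by blast
  have g: "z \<in> I \<Longrightarrow> inv_into I f (f z) = z" for z using inv_into_f_f[OF inj] by blast
  show "inv_into I f (u + v) = inv_into I f u + inv_into I f v"
  proof -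
    have "inv_into I f (u + v) = inv_into I f (f (x + y))" using x y fadd by simp
    also have "\<dots> = x + y" using g ideal_add[OF iI x(1) y(1)] by blast
    finally show ?thesis using x y g by simp
  qed
  show "inv_into I f (u * v) = inv_into I f u * inv_into I f v"
  proof -
    have "inv_into I f (u * v) = inv_into I f (f (x * y))" using x y fmul by simp
    also have "\<dots> = x * y" using g ideal_mult[OF iI y(1)] by blast
    finally show ?thesis using x y g by simp
  qed
qed

end


lemma sep_iff:
  assumes iI: "is_ideal I"
  shows "adic_separated I \<longleftrightarrow> (\<forall>z\<in>I. (\<forall>n. z \<in> ideal_pow I n) \<longrightarrow> z = 0)"
proof -
  have z: "0 \<in> (\<Inter>n. ideal_pow I n)" using ideal_zero[OF pow_ideal] by blast
  have sub: "(\<Inter>n. ideal_pow I n) \<subseteq> I" using pow_1[OF iI] by blast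
  show ?thesis unfolding adic_separated_def
  proof
    assume "(\<Inter>n. ideal_pow I n) = {0}" then show "\<forall>z\<in>I. (\<forall>n. z \<in> ideal_pow I n) \<longrightarrow> z = 0" by blast
  next
    assume H: "\<forall>z\<in>I. (\<forall>n. z \<in> ideal_pow I n) \<longrightarrow> z = 0"
    show "(\<Inter>n. ideal_pow I n) = {0}"
    proof
      show "(\<Inter>n. ideal_pow I n) \<subseteq> {0}" using H sub by blast
      show "{0} \<subseteq> (\<Inter>n. ideal_pow I n)" using z by blast
    qed
  qed
qed

lemma part1:
  assumes iI: "is_ideal I"
  shows "adic_separated I \<longleftrightarrow>
           (\<forall>x. (\<forall>n. x n \<in> I) \<and> adic_cauchy I x \<longrightarrow>
              (\<forall>a b. a \<in> I \<and> b \<in> I \<and> adic_limit I x a \<and> adic_limit I x b \<longrightarrow> a = b))"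
proof
  assume S: "adic_separated I"
  show "\<forall>x. (\<forall>n. x n \<in> I) \<and> adic_cauchy I x \<longrightarrow>
              (\<forall>a b. a \<in> I \<and> b \<in> I \<and> adic_limit I x a \<and> adic_limit I x b \<longrightarrow> a = b)"
  proof (intro allI impI)
    fix x a b assume "(\<forall>n. x n \<in> I) \<and> adic_cauchy I x"
      and H: "a \<in> I \<and> b \<in> I \<and> adic_limit I x a \<and> adic_limit I x b"
    then have "a \<in> I" "b \<in> I" and la: "adic_limit I x a" and lb: "adic_limit I x b" by auto
    have "a - b \<in> ideal_pow I k" for k
    proof -
      obtain N1 where N1: "\<forall>n\<ge>N1. x n - a \<in> ideal_pow I k" using la unfolding adic_limit_def by blast
      obtain N2 where N2: "\<forall>n\<ge>N2. x n - b \<in> ideal_pow I k" using lb unfolding adic_limit_def by blast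
      have "x (max N1 N2) - b \<in> ideal_pow I k" "x (max N1 N2) - a \<in> ideal_pow I k"
        using N1 N2 by auto
      then have "(x (max N1 N2) - b) - (x (max N1 N2) - a) \<in> ideal_pow I k"
        using ideal_diff[OF pow_ideal] by blast
      then show ?thesis by simp
    qed
    then have "a - b = 0" using S \<open>a \<in> I\<close> \<open>b \<in> I\<close> ideal_diff[OF iI] unfolding sep_iff[OF iI] by blast
    then show "a = b" by simp
  qed
next
  assume H: "\<forall>x. (\<forall>n. x n \<in> I) \<and> adic_cauchy I x \<longrightarrow>
              (\<forall>a b. a \<in> I \<and> b \<in> I \<and> adic_limit I x a \<and> adic_limit I x b \<longrightarrow> a = b)"
  show "adic_separated I" unfolding sep_iff[OF iI]
  proof (intro ballI impI)
    fix z assume "z \<in> I" and zn: "\<forall>n. z \<in> ideal_pow I n"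
    have z0: "(0::'a) \<in> ideal_pow I n" for n using ideal_zero[OF pow_ideal[of I n]] .
    have c: "adic_cauchy I (\<lambda>_. 0)" unfolding adic_cauchy_def using z0 by simp
    have l0: "adic_limit I (\<lambda>_. 0) 0" unfolding adic_limit_def using z0 by simp
    have zk: "- z \<in> ideal_pow I k" for k using ideal_neg[OF pow_ideal zn[rule_format, of k]] .
    have lz: "adic_limit I (\<lambda>_. 0) z" unfolding adic_limit_def using zk by simp
    have "(0::'a) = z" using H[rule_format, of "\<lambda>_. 0" 0 z] c l0 lz \<open>z \<in> I\<close> ideal_zero[OF iI] by blast
    then show "z = 0" by simp
  qed
qed

lemma part2:
  assumes iI: "is_ideal I"
  shows "adic_complete I \<longleftrightarrow>
           (\<forall>x. (\<forall>n. x n \<in> I) \<and> adic_cauchy I x \<longrightarrow>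
              (\<exists>!a. a \<in> I \<and> adic_limit I x a))"
proof
  assume C: "adic_complete I"
  then have S: "adic_separated I" unfolding adic_complete_def by blast
  show "\<forall>x. (\<forall>n. x n \<in> I) \<and> adic_cauchy I x \<longrightarrow> (\<exists>!a. a \<in> I \<and> adic_limit I x a)"
  proof (intro allI impI, elim conjE)
    fix x assume xI: "\<forall>n. x n \<in> I" and cx: "adic_cauchy I x"
    have "\<forall>n m. n \<le> m \<longrightarrow> x m - x n \<in> ideal_pow I n"
      using cx ideal_neg[OF pow_ideal] unfolding adic_cauchy_def by (metis minus_diff_eq)
    then obtain a where a: "\<forall>n. x n - a \<in> ideal_pow I n" using C unfolding adic_complete_def by blast
    have "x 1 - a \<in> I" using a pow_1[OF iI] by blast
    then have "x 1 - (x 1 - a) \<in> I" using xI ideal_diff[OF iI] by blast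
    then have aI: "a \<in> I" by simp
    have la: "adic_limit I x a" unfolding adic_limit_def
      using a pow_anti by blast
    show "\<exists>!a. a \<in> I \<and> adic_limit I x a"
      using aI la S part1[OF iI] xI cx by blast
  qed
next
  assume H: "\<forall>x. (\<forall>n. x n \<in> I) \<and> adic_cauchy I x \<longrightarrow> (\<exists>!a. a \<in> I \<and> adic_limit I x a)"
  have S: "adic_separated I" unfolding part1[OF iI] using H by blast
  have "\<exists>a. \<forall>n. y n - a \<in> ideal_pow I n" if y: "\<forall>n m. n \<le> m \<longrightarrow> y m - y n \<in> ideal_pow I n" for y
  proof -
    define x where "x n = y (Suc n) - y 1" for n
    have xI: "\<forall>n. x n \<in> I" unfolding x_def using y pow_1[OF iI] by auto
    have cx: "adic_cauchy I x" unfolding adic_cauchy_def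
    proof (intro allI impI)
      fix n m :: nat assume "n \<le> m"
      then have "y (Suc m) - y (Suc n) \<in> ideal_pow I n" using y pow_Suc_sub by blast
      then have "- (y (Suc m) - y (Suc n)) \<in> ideal_pow I n" using ideal_neg[OF pow_ideal] by blast
      then show "x n - x m \<in> ideal_pow I n" unfolding x_def by (simp add: algebra_simps)
    qed
    obtain b where b: "b \<in> I" "adic_limit I x b" using H xI cx by blast
    show ?thesis
    proof (intro exI allI)
      fix n
      obtain N where N: "\<forall>m\<ge>N. x m - b \<in> ideal_pow I n" using b(2) unfolding adic_limit_def by blast
      define m where "m = max N n"
      have 1: "x m - b \<in> ideal_pow I n" using N m_def by simp
      have 2: "y (Suc m) - y n \<in> ideal_pow I n" using y m_def by simp
      have "(x m - b) - (y (Suc m) - y n) \<in> ideal_pow I n" using 1 2 ideal_diff[OF pow_ideal] by blast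
      then show "y n - (y 1 + b) \<in> ideal_pow I n" unfolding x_def by (simp add: algebra_simps)
    qed
  qed
  then show "adic_complete I" unfolding adic_complete_def using S by blast
qed

context isoctx
begin

lemma pow_iff: "a \<in> I \<Longrightarrow> a \<in> ideal_pow I n \<longleftrightarrow> f a \<in> ideal_pow J n"
proof
  assume "a \<in> I" "a \<in> ideal_pow I n" then show "f a \<in> ideal_pow J n" by (rule pow_map)
next
  assume a: "a \<in> I" and fa: "f a \<in> ideal_pow J n"
  interpret g: isoctx J I "inv_into I f" using iI iJ inv_iso by unfold_locales
  have "inv_into I f (f a) \<in> ideal_pow I n" using g.pow_map fa fI a by blast
  moreover have "inv_into I f (f a) = a" using a bij by (simp add: bij_betw_def)
  ultimately show "a \<in> ideal_pow I n" by simp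
qed

lemma sep_transfer: "adic_separated J \<Longrightarrow> adic_separated I"
  unfolding sep_iff[OF iI] sep_iff[OF iJ]
proof (intro ballI impI)
  fix z assume H: "\<forall>w\<in>J. (\<forall>n. w \<in> ideal_pow J n) \<longrightarrow> w = 0" and z: "z \<in> I" "\<forall>n. z \<in> ideal_pow I n"
  then have "f z = 0" using pow_iff fI by blast
  then show "z = 0" using finj[of z 0] f0 z ideal_zero[OF iI] by simp
qed

lemma cauchy_iff: "\<forall>n. x n \<in> I \<Longrightarrow> adic_cauchy I x \<longleftrightarrow> adic_cauchy J (f \<circ> x)"
proof -
  assume xI: "\<forall>n. x n \<in> I"
  have "x n - x m \<in> ideal_pow I n \<longleftrightarrow> f (x n) - f (x m) \<in> ideal_pow J n" for n m
    using pow_iff[of "x n - x m" n] fdiff[of "x n" "x m"] ideal_diff[OF iI, of "x n" "x m"] xI by simp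
  then show ?thesis unfolding adic_cauchy_def by simp
qed

lemma limit_iff: "\<forall>n. x n \<in> I \<Longrightarrow> a \<in> I \<Longrightarrow> adic_limit I x a \<longleftrightarrow> adic_limit J (f \<circ> x) (f a)"
proof -
  assume xI: "\<forall>n. x n \<in> I" and a: "a \<in> I"
  have "x n - a \<in> ideal_pow I k \<longleftrightarrow> f (x n) - f a \<in> ideal_pow J k" for n k
    using pow_iff[of "x n - a" k] fdiff[of "x n" a] ideal_diff[OF iI, of "x n" a] xI a by simp
  then show ?thesis unfolding adic_limit_def by simp
qed

lemma comp_transfer: "adic_complete J \<Longrightarrow> adic_complete I"
  unfolding part2[OF iI] part2[OF iJ]
proof (intro allI impI, elim conjE)
  fix x assume H: "\<forall>x. (\<forall>n. x n \<in> J) \<and> adic_cauchy J x \<longrightarrow> (\<exists>!a. a \<in> J \<and> adic_limit J x a)"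
    and xI: "\<forall>n. x n \<in> I" and cx: "adic_cauchy I x"
  have "\<forall>n. (f \<circ> x) n \<in> J" using xI fI by simp
  moreover have "adic_cauchy J (f \<circ> x)" using cauchy_iff xI cx by blast
  ultimately obtain b where b: "b \<in> J" "adic_limit J (f \<circ> x) b"
    and bu: "\<And>b'. b' \<in> J \<Longrightarrow> adic_limit J (f \<circ> x) b' \<Longrightarrow> b' = b" using H by blast
  obtain a where a: "a \<in> I" "b = f a" using b(1) bij by (metis bij_betw_imp_surj_on imageE)
  show "\<exists>!a. a \<in> I \<and> adic_limit I x a"
  proof (rule ex1I[of _ a])
    show "a \<in> I \<and> adic_limit I x a" using a b limit_iff xI by blast
    fix a' assume "a' \<in> I \<and> adic_limit I x a'"
    then have "f a' = f a" using bu fI limit_iff xI a by blast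
    then show "a' = a" using finj a \<open>a' \<in> I \<and> adic_limit I x a'\<close> by blast
  qed
qed

end

theorem lemma3p9:
  fixes I :: "'a::comm_ring_1 set"
  assumes "is_ideal I"
  shows "(adic_separated I \<longleftrightarrow>
           (\<forall>x. (\<forall>n. x n \<in> I) \<and> adic_cauchy I x \<longrightarrow>
              (\<forall>a b. a \<in> I \<and> b \<in> I \<and> adic_limit I x a \<and> adic_limit I x b \<longrightarrow> a = b)))
       \<and> (adic_complete I \<longleftrightarrow>
           (\<forall>x. (\<forall>n. x n \<in> I) \<and> adic_cauchy I x \<longrightarrow>
              (\<exists>!a. a \<in> I \<and> adic_limit I x a)))
       \<and> (\<forall>(J :: 'b::comm_ring_1 set) f. is_ideal J \<and> nonunital_ring_iso f I J \<longrightarrow>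
              (adic_separated I \<longleftrightarrow> adic_separated J) \<and>
              (adic_complete I \<longleftrightarrow> adic_complete J))"
proof -
  have P: "\<forall>(J :: 'b::comm_ring_1 set) f. is_ideal J \<and> nonunital_ring_iso f I J \<longrightarrow>
              (adic_separated I \<longleftrightarrow> adic_separated J) \<and>
              (adic_complete I \<longleftrightarrow> adic_complete J)"
  proof (intro allI impI conjI)
  fix J :: "'b::comm_ring_1 set" and f assume H: "is_ideal J \<and> nonunital_ring_iso f I J"
  interpret F: isoctx I J f using H assms by unfold_locales auto
  interpret G: isoctx J I "inv_into I f" using H assms F.inv_iso by unfold_locales auto
  show "adic_separated I = adic_separated J" using F.sep_transfer G.sep_transfer by blast
  show "adic_complete I = adic_complete J" using F.comp_transfer G.comp_transfer by blast
  qed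
  show ?thesis using P part1[OF assms] part2[OF assms] by blast
qed

end
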